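(* Let $q=p^m$ with $p$ an odd prime and $m\ge1$, and suppose $q\equiv 1\pmod 6$. Then the power function $f(x)=x^{q+2}$ on $\mathbb{F}_{q^2}$ satisfies $\beta_f\le 5$.
   Context: For $f:\mathbb{F}_{q^2}\to\mathbb{F}_{q^2}$ and $a,b\in\mathbb{F}_{q^2}$, $\beta_f(a,b)$ is the number of $(x,y)\in\mathbb{F}_{q^2}^2$ with $f(x)-f(y)=b$ and $f(x+a)-f(y+a)=b$; the boomerang uniformity is $\beta_f=\max_{a,b\in\mathbb{F}_{q^2}^*}\beta_f(a,b)$. *)

theory Defs
  imports Main "HOL-Computational_Algebra.Primes"
begin

definition boomerang_count :: "('a::field \<Rightarrow> 'a) \<Rightarrow> 'a \<Rightarrow> 'a \<Rightarrow> nat" where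
  "boomerang_count f a b =
     card {(x, y). f x - f y = b \<and> f (x + a) - f (y + a) = b}"

definition boomerang_uniformity :: "('a::{field,finite} \<Rightarrow> 'a) \<Rightarrow> nat" where
  "boomerang_uniformity f =
     Max {boomerang_count f a b | a b. a \<noteq> 0 \<and> b \<noteq> 0}"

end

theory Submission imports Defs "HOL-Number_Theory.Residues" "HOL-Computational_Algebra.Polynomial" begin

lemma card_le_roots:
  fixes P :: "'a::idom poly"
  assumes "P \<noteq> 0" "inj_on g A" "\<And>x. x\<in>A \<Longrightarrow> poly P (g x) = 0"
  shows "card A \<le> degree P"
proof -
  have "card A = card (g ` A)" using assms(2) by (simp add: card_image)
  also have "\<dots> \<le> card {x. poly P x = 0}"
    by (rule card_mono[OF poly_roots_finite[OF assms(1)]]) (use assms(3) in auto)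
  also have "\<dots> \<le> degree P" by (rule card_poly_roots_bound[OF assms(1)])
  finally show ?thesis .
qed


lemma h1:
  fixes u w N c d :: "'a::comm_ring_1"
  assumes "u*(N+2) + w = c" "w*(N+2) + u = d"
  shows "u*((N+1)*(N+3)) = c*(N+2) - d"
proof -
  have w: "w = c - u*(N+2)" using assms(1) by (simp add: algebra_simps)
  have "d = (c - u*(N+2))*(N+2) + u" using assms(2) w by simp
  then show ?thesis by (simp add: algebra_simps numeral_eq_Suc)
qed
lemma h2:
  fixes u w N K A B :: "'a::comm_ring_1"
  assumes "u*K = A" "w*K = B" "N = u*w"
  shows "N*K^2 = A*B"
  using assms by (auto simp: power2_eq_square algebra_simps)
lemma hq1:
  fixes u w N c :: "'a::comm_ring_1"
  assumes "u*(N+2) + w = c" "N = u*w" "N = -1"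
  shows "poly [:-1, -c, 1:] u = 0"
proof -
  have w: "w = c - u" using assms(1) unfolding assms(3) by (simp add: algebra_simps)
  show ?thesis using assms(2,3) unfolding w by (simp add: algebra_simps power2_eq_square)
qed
lemma hq2:
  fixes u w N c :: "'a::comm_ring_1"
  assumes "u*(N+2) + w = c" "N = u*w" "N = -3"
  shows "poly [:3, c, 1:] u = 0"
proof -
  have w: "w = c + u" using assms by (simp add: algebra_simps)
  show ?thesis using assms(2,3) unfolding w by (simp add: algebra_simps power2_eq_square)
qed
lemma hc1:
  fixes N c :: "'a::idom"
  assumes "N*((N+1)*(N+3))^2 = (c*(N+2) - c)*(c*(N+2) - c)" "N + 1 \<noteq> 0"
  shows "poly [:-(c^2), 9, 6, 1:] N = 0"
proof -
  have "(N+1)^2 * (-(c^2) + N*(9 + N*(6 + N))) = 0"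
    using assms(1) by (simp add: algebra_simps power2_eq_square numeral_eq_Suc)
  then show ?thesis using assms(2) by simp
qed
lemma hc2:
  fixes N c :: "'a::idom"
  assumes "N*((N+1)*(N+3))^2 = (c*(N+2) - -c)*(-c*(N+2) - c)" "N + 3 \<noteq> 0"
  shows "poly [:c^2, 1, 2, 1:] N = 0"
proof -
  have "(N+3)^2 * (c^2 + N*(1 + N*(2 + N))) = 0"
    using assms(1) by (simp add: algebra_simps power2_eq_square numeral_eq_Suc)
  then show ?thesis using assms(2) by simp
qed
lemma hc3:
  fixes N c d :: "'a::idom"
  assumes "N*((N+1)*(N+3))^2 = (c*(N+2) - d)*(d*(N+2) - c)"
  shows "poly [:-(5*(c*d) - 2*c^2 - 2*d^2), 9 - (4*(c*d) - c^2 - d^2), 24 - c*d, 22, 8, 1:] N = 0"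
  using assms by (simp add: algebra_simps power2_eq_square numeral_eq_Suc)


lemma hE:
  fixes X Y Xb Yb :: "'a::comm_ring_1"
  shows "((Xb+1)*(X+1)^2 - (Yb+1)*(Y+1)^2) - (Xb*X^2 - Yb*Y^2) = (X+Y+1)*((X-Y)+(Xb-Yb)) + (X-Y)*(Xb+Yb+1)"
  by (simp add: algebra_simps power2_eq_square)
lemma hF:
  fixes X Y Xb Yb :: "'a::comm_ring_1"
  assumes "Y = -X-1" "Yb = -Xb-1"
  shows "Xb*X^2 - Yb*Y^2 = Xb*X^2 + (Xb+1)*(X+1)^2"
  unfolding assms by (simp add: algebra_simps power2_eq_square)
lemma hG:
  fixes X Xb :: "'a::comm_ring_1"
  shows "(2*Xb+1)*((2*X+1)^2+1) + 2*(2*X+1) = 4*(Xb*X^2 + (Xb+1)*(X+1)^2)"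
  by (simp add: algebra_simps power2_eq_square)
lemma hV:
  fixes u ub v vb :: "'a::comm_ring_1"
  assumes "u*vb = -(v*(u+ub))" "ub*v = -(vb*(u+ub))"
  shows "(u*ub)*(v*vb) = (u+ub)^2*(v*vb)"
proof -
  have "(u*ub)*(v*vb) = (u*vb)*(ub*v)" by (simp add: ac_simps)
  also have "\<dots> = (u+ub)^2*(v*vb)" unfolding assms by (simp add: algebra_simps power2_eq_square)
  finally show ?thesis .
qed
lemma hW:
  fixes u ub :: "'a::comm_ring_1"
  assumes "u*ub = (u+ub)^2"
  shows "u^2 + u*ub + ub^2 = 0"
  using assms by (simp add: algebra_simps power2_eq_square)

locale cjl =
  fixes cj :: "'a::{field,finite} \<Rightarrow> 'a"
  assumes cj_add: "\<And>s t. cj (s+t) = cj s + cj t"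
    and cj_mult: "\<And>s t. cj (s*t) = cj s * cj t"
    and cj_cj: "\<And>s. cj (cj s) = s"
    and cj_one: "cj 1 = 1"
    and two: "(2::'a) \<noteq> 0"
begin

lemma cj_zero[simp]: "cj 0 = 0"
proof -
  have h: "cj 0 = cj 0 + cj 0" using cj_add[of 0 0] by simp
  show ?thesis by (metis add_cancel_right_right h)
qed
lemma cj_minus[simp]: "cj (- s) = - cj s"
  using cj_add[of s "-s"] by (simp add: eq_neg_iff_add_eq_0 add.commute)
lemma cj_diff[simp]: "cj (s - t) = cj s - cj t"
  using cj_add[of s "-t"] by simp
lemma cj_two[simp]: "cj 2 = 2"
proof -
  have "cj 2 = cj (1+1)" by (simp only: one_add_one)
  also have "\<dots> = cj 1 + cj 1" by (rule cj_add)
  also have "\<dots> = 2" by (simp add: cj_one)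
  finally show ?thesis .
qed
lemma cj_three[simp]: "cj 3 = 3"
proof -
  have "(3::'a) = 2 + 1" by simp
  then have "cj 3 = cj (2+1)" by simp
  also have "\<dots> = 3" by (simp only: cj_add cj_one cj_two) simp
  finally show ?thesis .
qed
lemma cj_eq0[simp]: "cj s = 0 \<longleftrightarrow> s = 0"
  by (metis cj_cj cj_zero)
lemma cj_pow[simp]: "cj (s ^ n) = cj s ^ n"
  by (induction n) (auto simp: cj_mult cj_one)
lemma cj_div[simp]: "cj (s / t) = cj s / cj t"
proof (cases "t = 0")
  case False
  have "cj s = cj (t * (s/t))" using False by simp
  also have "\<dots> = cj t * cj (s/t)" by (rule cj_mult)
  finally have h: "cj s = cj t * cj (s/t)" .
  have ne: "cj t \<noteq> 0" using False by simp
  show ?thesis by (metis h ne nonzero_mult_div_cancel_left)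
qed simp

lemma U_bound:
  assumes c: "c \<noteq> 0"
  shows "card {u. cj u * (u^2+1) + 2*u = c} \<le> 5"
proof -
  define U where "U = {u. cj u * (u^2+1) + 2*u = c}"
  define Nf where "Nf u = u * cj u" for u
  have NfN: "cj (Nf u) = Nf u" for u unfolding Nf_def by (simp add: cj_mult cj_cj mult.commute)
  have E: "u * (Nf u + 2) + cj u = c" if "u \<in> U" for u
    using that unfolding U_def Nf_def by (simp add: algebra_simps power2_eq_square)
  have Ec: "cj u * (Nf u + 2) + u = cj c" if "u \<in> U" for u
  proof -
    have "cj (u * (Nf u + 2) + cj u) = cj c" using E[OF that] by simp
    then show ?thesis using NfN[of u] by (simp add: cj_add cj_mult cj_cj)
  qed
  have star: "u * ((Nf u + 1) * (Nf u + 3)) = c * (Nf u + 2) - cj c" if "u \<in> U" for u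
    using h1[OF E[OF that] Ec[OF that]] .
  have star2: "cj u * ((Nf u + 1) * (Nf u + 3)) = cj c * (Nf u + 2) - c" if "u \<in> U" for u
    using h1[OF Ec[OF that] E[OF that]] .
  have P: "Nf u * ((Nf u + 1) * (Nf u + 3))^2 = (c * (Nf u + 2) - cj c) * (cj c * (Nf u + 2) - c)"
    if "u \<in> U" for u
    using h2[OF star[OF that] star2[OF that]] unfolding Nf_def by simp
  have detinj: "inj_on Nf {u\<in>U. Nf u \<noteq> -1 \<and> Nf u \<noteq> -3}"
  proof (rule inj_onI)
    fix u w assume u: "u \<in> {u\<in>U. Nf u \<noteq> -1 \<and> Nf u \<noteq> -3}" and w: "w \<in> {u\<in>U. Nf u \<noteq> -1 \<and> Nf u \<noteq> -3}"
      and eq: "Nf u = Nf w"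
    have nz: "(Nf u + 1) * (Nf u + 3) \<noteq> 0" using u
      by (auto simp: add_eq_0_iff2)
    have "u * ((Nf u + 1) * (Nf u + 3)) = w * ((Nf u + 1) * (Nf u + 3))"
      using star[of u] star[of w] u w eq by auto
    then show "u = w" using nz by simp
  qed
  have Eq: "u * (Nf u + 2) + cj u = c" "Nf u = u * cj u" if "u \<in> U" for u
    using E[OF that] by (auto simp: Nf_def)
  have fin: "finite A" for A :: "'a set" by simp
  have "card U \<le> 5"
  proof (cases "\<exists>u0\<in>U. Nf u0 = -1")
    case True
    then obtain u0 where u0: "u0 \<in> U" "Nf u0 = -1" by blast
    have cc: "cj c = c" using star[OF u0(1)] u0(2) by simp
    have n3: "Nf u \<noteq> -3" if "u \<in> U" for u
    proof
      assume "Nf u = -3"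
      then have "0 = c * (-1) - c" using star[OF that] cc by simp
      then have "2 * c = 0" by (simp add: algebra_simps)
      then show False using two c by simp
    qed
    have sub: "U \<subseteq> {u\<in>U. Nf u = -1} \<union> {u\<in>U. Nf u \<noteq> -1 \<and> Nf u \<noteq> -3}"
      using n3 by auto
    have c1: "card {u\<in>U. Nf u = -1} \<le> 2"
      using card_le_roots[of "[:-1, -c, 1:]" id "{u\<in>U. Nf u = -1}"] hq1[OF Eq] by auto
    have c2: "card {u\<in>U. Nf u \<noteq> -1 \<and> Nf u \<noteq> -3} \<le> 3"
    proof -
      have "card {u\<in>U. Nf u \<noteq> -1 \<and> Nf u \<noteq> -3} \<le> degree [:-(c^2), 9, 6, 1:]"
      proof (rule card_le_roots[OF _ detinj])
        fix x assume x: "x \<in> {u\<in>U. Nf u \<noteq> -1 \<and> Nf u \<noteq> -3}"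
        have "Nf x + 1 \<noteq> 0" using x by (auto simp: add_eq_0_iff2)
        then show "poly [:-(c^2), 9, 6, 1:] (Nf x) = 0" using hc1[of "Nf x" c] P[of x] cc x by simp
      qed simp
      then show ?thesis by simp
    qed
    have "card U \<le> card ({u\<in>U. Nf u = -1} \<union> {u\<in>U. Nf u \<noteq> -1 \<and> Nf u \<noteq> -3})"
      by (rule card_mono[OF fin sub])
    also have "\<dots> \<le> 5" using card_Un_le[of "{u\<in>U. Nf u = -1}" "{u\<in>U. Nf u \<noteq> -1 \<and> Nf u \<noteq> -3}"] c1 c2 by linarith
    finally show ?thesis .
  next
    case F1: False
    show ?thesis
    proof (cases "\<exists>u0\<in>U. Nf u0 = -3")
      case True
      then obtain u0 where u0: "u0 \<in> U" "Nf u0 = -3" by blast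
      have cc: "cj c = - c" using star[OF u0(1)] u0(2) by simp
      have sub: "U \<subseteq> {u\<in>U. Nf u = -3} \<union> {u\<in>U. Nf u \<noteq> -1 \<and> Nf u \<noteq> -3}"
        using F1 by auto
      have c1: "card {u\<in>U. Nf u = -3} \<le> 2"
        using card_le_roots[of "[:3, c, 1:]" id "{u\<in>U. Nf u = -3}"] hq2[OF Eq] by auto
      have c2: "card {u\<in>U. Nf u \<noteq> -1 \<and> Nf u \<noteq> -3} \<le> 3"
      proof -
        have "card {u\<in>U. Nf u \<noteq> -1 \<and> Nf u \<noteq> -3} \<le> degree [:c^2, 1, 2, 1:]"
        proof (rule card_le_roots[OF _ detinj])
          fix x assume x: "x \<in> {u\<in>U. Nf u \<noteq> -1 \<and> Nf u \<noteq> -3}"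
          have "Nf x + 3 \<noteq> 0" using x by (auto simp: add_eq_0_iff2)
          then show "poly [:c^2, 1, 2, 1:] (Nf x) = 0" using hc2[of "Nf x" c] P[of x] cc x by simp
        qed simp
        then show ?thesis by simp
      qed
      have "card U \<le> card ({u\<in>U. Nf u = -3} \<union> {u\<in>U. Nf u \<noteq> -1 \<and> Nf u \<noteq> -3})"
        by (rule card_mono[OF fin sub])
      also have "\<dots> \<le> 5" using card_Un_le[of "{u\<in>U. Nf u = -3}" "{u\<in>U. Nf u \<noteq> -1 \<and> Nf u \<noteq> -3}"] c1 c2 by linarith
      finally show ?thesis .
    next
      case False
      then have "U = {u\<in>U. Nf u \<noteq> -1 \<and> Nf u \<noteq> -3}" using F1 by auto
      moreover have "card {u\<in>U. Nf u \<noteq> -1 \<and> Nf u \<noteq> -3} \<le> 5"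
      proof -
        have "card {u\<in>U. Nf u \<noteq> -1 \<and> Nf u \<noteq> -3} \<le> degree [:-(5*(c*cj c) - 2*c^2 - 2*(cj c)^2), 9 - (4*(c*cj c) - c^2 - (cj c)^2), 24 - c*cj c, 22, 8, 1:]"
        proof (rule card_le_roots[OF _ detinj])
          fix x assume x: "x \<in> {u\<in>U. Nf u \<noteq> -1 \<and> Nf u \<noteq> -3}"
          then show "poly [:-(5*(c*cj c) - 2*c^2 - 2*(cj c)^2), 9 - (4*(c*cj c) - c^2 - (cj c)^2), 24 - c*cj c, 22, 8, 1:] (Nf x) = 0"
            using x by (intro hc3 P) simp
        qed simp
        then show ?thesis by simp
      qed
      ultimately show ?thesis by simp
    qed
  qed
  then show ?thesis unfolding U_def .
qed

lemma S_bound: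
  assumes K3: "\<And>u. u \<noteq> 0 \<Longrightarrow> u^2 + u * cj u + (cj u)^2 \<noteq> 0"
    and a: "a \<noteq> 0" and b: "b \<noteq> 0"
  shows "card {(x,y). cj x * x^2 - cj y * y^2 = b \<and> cj (x+a) * (x+a)^2 - cj (y+a) * (y+a)^2 = b} \<le> 5"
proof -
  define S where "S = {(x,y). cj x * x^2 - cj y * y^2 = b \<and> cj (x+a) * (x+a)^2 - cj (y+a) * (y+a)^2 = b}"
  define K where "K = cj a * a^2"
  have K0: "K \<noteq> 0" using a unfolding K_def by simp
  define \<beta> where "\<beta> = b / K"
  have \<beta>0: "\<beta> \<noteq> 0" using b K0 unfolding \<beta>_def by simp
  define c where "c = 4 * \<beta>"
  have four: "(4::'a) \<noteq> 0" using two by (metis mult_eq_0_iff numeral_Bit0 one_add_one mult_2)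
  have c0: "c \<noteq> 0" using four \<beta>0 unfolding c_def by simp
  define U where "U = {u. cj u * (u^2+1) + 2*u = c}"
  have key: "y = -x-a \<and> 2*x/a+1 \<in> U" if xy: "(x,y) \<in> S" for x y
  proof -
    define X where "X = x/a"
    define Y where "Y = y/a"
    have x: "x = a*X" and y: "y = a*Y" using a unfolding X_def Y_def by simp_all
    define Xb where "Xb = cj X"
    define Yb where "Yb = cj Y"
    have H1: "cj x * x^2 - cj y * y^2 = b" and H2: "cj (x+a) * (x+a)^2 - cj (y+a) * (y+a)^2 = b"
      using xy unfolding S_def by auto
    have "cj x * x^2 - cj y * y^2 = K * (Xb*X^2 - Yb*Y^2)"
      unfolding x y K_def Xb_def Yb_def by (simp add: cj_mult algebra_simps power2_eq_square)
    then have F1: "Xb*X^2 - Yb*Y^2 = \<beta>" using H1 K0 unfolding \<beta>_def by (simp add: field_simps)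
    have "cj (x+a) * (x+a)^2 - cj (y+a) * (y+a)^2 = K * ((Xb+1)*(X+1)^2 - (Yb+1)*(Y+1)^2)"
      unfolding x y K_def Xb_def Yb_def by (simp add: cj_mult cj_add cj_one algebra_simps power2_eq_square)
    then have F2: "(Xb+1)*(X+1)^2 - (Yb+1)*(Y+1)^2 = \<beta>" using H2 K0 unfolding \<beta>_def by (simp add: field_simps)
    define u where "u = X - Y"
    define v where "v = X + Y + 1"
    have ub: "cj u = Xb - Yb" and vb: "cj v = Xb + Yb + 1"
      unfolding u_def v_def Xb_def Yb_def by (simp_all add: cj_add cj_one)
    have "v*(u + (Xb - Yb)) + u * (Xb + Yb + 1) = 0"
      using hE[of Xb X Yb Y] F1 F2 unfolding u_def v_def by simp
    then have E1: "v*(u + cj u) + u * cj v = 0" unfolding ub vb .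
    have E2: "cj v*(cj u + u) + cj u * v = 0"
    proof -
      have "cj (v*(u + cj u) + u * cj v) = 0" using E1 by simp
      then show ?thesis by (simp add: cj_add cj_mult cj_cj mult.commute)
    qed
    have u0: "u \<noteq> 0"
    proof
      assume "u = 0"
      then have "X = Y" unfolding u_def by simp
      then show False using F1 \<beta>0 unfolding Xb_def Yb_def by simp
    qed
    have v0: "v = 0"
    proof (rule ccontr)
      assume "v \<noteq> 0"
      then have vv: "v * cj v \<noteq> 0" by simp
      have "u * cj v = -(v*(u + cj u))" using E1 by (simp add: eq_neg_iff_add_eq_0 add.commute)
      moreover have "cj u * v = -(cj v*(u + cj u))" using E2 by (simp add: eq_neg_iff_add_eq_0 add.commute)
      ultimately have "(u * cj u)*(v * cj v) = (u + cj u)^2*(v * cj v)" by (rule hV)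
      then have "u * cj u = (u + cj u)^2" using vv by simp
      then have "u^2 + u * cj u + (cj u)^2 = 0" by (rule hW)
      then show False using K3[OF u0] by simp
    qed
    then have Y: "Y = -X-1" unfolding v_def by (simp add: algebra_simps eq_neg_iff_add_eq_0)
    then have Yb': "Yb = -Xb-1" unfolding Xb_def Yb_def by (simp add: cj_add cj_one)
    have F: "Xb*X^2 + (Xb+1)*(X+1)^2 = \<beta>" using F1 hF[OF Y Yb'] by simp
    have yy: "y = -x-a" unfolding y x Y by (simp add: algebra_simps)
    have "2*x/a+1 = 2*X+1" unfolding X_def by simp
    moreover have "cj (2*X+1) = 2*Xb+1" unfolding Xb_def by (simp add: cj_add cj_mult cj_one)
    ultimately have "cj (2*x/a+1) * ((2*x/a+1)^2+1) + 2*(2*x/a+1) = 4*\<beta>"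
      using hG[of Xb X] F by simp
    then show ?thesis using yy unfolding U_def c_def by simp
  qed
  have sub: "S \<subseteq> (\<lambda>x. (x, -x-a)) ` {x. 2*x/a+1 \<in> U}"
  proof
    fix z assume "z \<in> S"
    then obtain x y where z: "z = (x,y)" and "(x,y) \<in> S" by (cases z) auto
    then show "z \<in> (\<lambda>x. (x, -x-a)) ` {x. 2*x/a+1 \<in> U}" using key[of x y] by auto
  qed
  have "card S \<le> card ((\<lambda>x. (x, -x-a)) ` {x. 2*x/a+1 \<in> U})" by (rule card_mono[OF _ sub]) simp
  also have "\<dots> \<le> card {x. 2*x/a+1 \<in> U}" by (rule card_image_le) simp
  also have "\<dots> \<le> card U"
  proof (rule card_inj_on_le[of "\<lambda>x. 2*x/a+1"])
    show "inj_on (\<lambda>x. 2*x/a+1) {x. 2*x/a+1 \<in> U}" using a two by (auto intro!: inj_onI)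
  qed auto
  also have "\<dots> \<le> 5" unfolding U_def by (rule U_bound[OF c0])
  finally show ?thesis unfolding S_def .
qed

end

lemma tfrac:
  fixes u w :: "'a::field"
  assumes "u \<noteq> 0"
  shows "(w/u)^2 + w/u + 1 = (u^2 + u * w + w^2) / u^2"
  using assms by (simp add: field_simps power2_eq_square)

lemma cube_fact:
  fixes t :: "'a::comm_ring_1"
  shows "t^3 - 1 = (t - 1) * (t^2 + t + 1)"
  by (simp add: algebra_simps power2_eq_square power3_eq_cube)

lemma fermat_field:
  fixes x :: "'a::{field,finite}"
  assumes "x \<noteq> 0"
  shows "x ^ (card (UNIV::'a set) - 1) = 1"
proof -
  let ?A = "UNIV - {0::'a}"
  have inj: "inj_on ((*) x) ?A" using assms by (auto intro: inj_onI)
  have img: "(*) x ` ?A = ?A"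
  proof
    show "(*) x ` ?A \<subseteq> ?A" using assms by auto
    show "?A \<subseteq> (*) x ` ?A"
    proof
      fix y assume y: "y \<in> ?A"
      have "y = x * (y/x)" using assms by simp
      moreover have "y/x \<in> ?A" using y assms by simp
      ultimately show "y \<in> (*) x ` ?A" by blast
    qed
  qed
  have "prod id ?A = prod id ((*) x ` ?A)" by (simp only: img)
  also have "\<dots> = prod ((*) x) ?A" by (simp add: prod.reindex[OF inj])
  also have "\<dots> = x ^ card ?A * prod id ?A" by (simp add: prod.distrib)
  finally have h: "prod id ?A = x ^ card ?A * prod id ?A" .
  have nz: "prod id ?A \<noteq> 0" by (simp add: prod_zero_iff)
  have "x ^ card ?A = 1" using h nz by simp
  moreover have "card ?A = card (UNIV::'a set) - 1" by (simp add: card_Diff_singleton)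
  ultimately show ?thesis by simp
qed

theorem proposition7:
  fixes p m q :: nat
  assumes "prime p" and "odd p" and "m \<ge> 1" and "q = p ^ m"
    and "q mod 6 = 1"
    and "card (UNIV :: 'a::{field,finite} set) = q ^ 2"
  shows "boomerang_uniformity (\<lambda>x::'a. x ^ (q + 2)) \<le> 5"
proof -
  have finU: "finite (UNIV::'a set)" by simp
  have pc0: "prime CHAR('a)" using prime_CHAR_semidom finite_imp_CHAR_pos[OF finU] by blast
  have charp: "CHAR('a) = p"
  proof -
    have "CHAR('a) dvd card (UNIV :: 'a set)" by (rule CHAR_dvd_CARD)
    then have "CHAR('a) dvd p^(m*2)" using assms(4,6) by (simp add: power_mult)
    then have "CHAR('a) dvd p" by (rule prime_dvd_power[OF pc0])
    then show ?thesis by (rule primes_dvd_imp_eq[OF pc0 assms(1)])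
  qed
  have pc: "prime CHAR('a)" by (rule pc0)
  have frob: "(s+t)^q = s^q + t^q" for s t :: 'a
    using freshmans_dream'[OF pc, of q m s t] assms(4) charp by simp
  have q1: "q \<ge> 1" using assms(5) by (cases q) auto
  have fermat: "s^(q*q) = s" for s :: 'a
  proof (cases "s = 0")
    case True then show ?thesis using q1 by simp
  next
    case False
    have "q*q = (card (UNIV::'a set) - 1) + 1" using assms(6) q1 by (simp add: power2_eq_square)
    then have "s^(q*q) = s^(card (UNIV::'a set) - 1) * s" by (simp add: power_add)
    then show ?thesis using fermat_field[OF False] by simp
  qed
  have two: "(2::'a) \<noteq> 0"
  proof
    assume "(2::'a) = 0"
    then have "of_nat 2 = (0::'a)" by simp
    then have "p dvd 2" using of_nat_eq_0_iff_char_dvd charp by metis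
    then have "p \<le> 2" by (simp add: dvd_imp_le)
    moreover have "p \<ge> 2" using assms(1) by (simp add: prime_ge_2_nat)
    ultimately show False using assms(2) by simp
  qed
  have three: "(3::'a) \<noteq> 0"
  proof
    assume "(3::'a) = 0"
    then have "of_nat 3 = (0::'a)" by simp
    then have "p dvd 3" using of_nat_eq_0_iff_char_dvd charp by metis
    then have "p \<le> 3" by (simp add: dvd_imp_le)
    moreover have "p \<ge> 2" using assms(1) by (simp add: prime_ge_2_nat)
    ultimately have "p = 3" using assms(2) by presburger
    then have "3 dvd q" using assms(3,4) by (simp add: dvd_power)
    then show False using assms(5) by presburger
  qed
  interpret cjl "\<lambda>s::'a. s^q"
  proof
    show "(s + t) ^ q = s ^ q + t ^ q" for s t :: 'a by (rule frob)
    show "(s * t) ^ q = s ^ q * t ^ q" for s t :: 'a by (rule power_mult_distrib)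
    show "(s ^ q) ^ q = s" for s :: 'a using fermat[of s] by (simp only: power_mult[symmetric])
    show "(1::'a) ^ q = 1" by (rule power_one)
    show "(2::'a) \<noteq> 0" by (rule two)
  qed
  have K3: "u^2 + u * u^q + (u^q)^2 \<noteq> 0" if u0: "u \<noteq> 0" for u :: 'a
  proof
    define w where "w = u^q"
    assume eq: "u^2 + u * u^q + (u^q)^2 = 0"
    then have eqw: "u^2 + u * w + w^2 = 0" unfolding w_def .
    define t where "t = w / u"
    have "t^2 + t + 1 = (u^2 + u * w + w^2) / u^2"
      unfolding t_def using u0 by (rule tfrac)
    then have t2: "t^2 + t + 1 = 0" using eqw by simp
    have t3: "t^3 = 1"
    proof -
      have "t^3 - 1 = (t - 1) * (t^2 + t + 1)" by (rule cube_fact)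
      then show ?thesis using t2 by simp
    qed
    have wq: "w^q = u" unfolding w_def using fermat[of u] by (simp only: power_mult[symmetric])
    have "t^(q+1) = w^(q+1) / u^(q+1)" unfolding t_def by (rule power_divide)
    also have "w^(q+1) = u * w" using wq by (simp only: power_add power_one_right)
    also have "u^(q+1) = u * w" unfolding w_def by (simp only: power_add power_one_right mult.commute)
    finally have tq: "t^(q+1) = 1" using u0 unfolding w_def by simp
    have "q + 1 = 3 * (q div 3) + 2" using assms(5) by presburger
    then have "t^(q+1) = (t^3)^(q div 3) * t^2" by (simp only: power_add power_mult)
    then have tt: "t^2 = 1" using tq t3 by simp
    have "t = 1"
    proof -
      have "t^3 = t * t^2" by (simp only: power2_eq_square power3_eq_cube mult.assoc)
      then show ?thesis using tt t3 by simp
    qed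
    then have "(3::'a) = 0" using t2 by simp
    then show False using three by simp
  qed
  have bound: "boomerang_count (\<lambda>x::'a. x ^ (q + 2)) a b \<le> 5" if "a \<noteq> 0" "b \<noteq> 0" for a b :: 'a
    unfolding boomerang_count_def power_add using S_bound[OF K3 that] by simp
  let ?M = "{boomerang_count (\<lambda>x::'a. x ^ (q + 2)) a b | a b. a \<noteq> 0 \<and> b \<noteq> 0}"
  have sub: "?M \<subseteq> {..5}" using bound by auto
  have "finite ?M" by (rule finite_subset[OF sub]) simp
  moreover have "boomerang_count (\<lambda>x::'a. x ^ (q + 2)) 1 1 \<in> ?M" by (intro CollectI exI[of _ "1::'a"]) simp
  then have "?M \<noteq> {}" by blast
  ultimately show ?thesis unfolding boomerang_uniformity_def using sub by (intro Max.boundedI) auto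
qed

end
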